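(* Fix $r\geq 3$ and integers $v_1\geq 2r-1$, $v_2\geq r+1$. Let $F_0$ be the $r$-uniform hypergraph on $v_1+v_2$ vertices that is the disjoint union of an $r$-uniform $v_1$-cycle and a complete $r$-uniform hypergraph on $v_2$ vertices. Let $e_1,\ldots,e_m$ be all $r$-subsets of $V(F_0)$ that are not edges of $F_0$, and for $i\in[m]$ let $F_i=F_0\cup\{e_1,\ldots,e_i\}$. Let $F$ be the disjoint union of hypergraphs isomorphic to $F_0,F_1,\ldots,F_m$. Then $s(F)=2$ and $\lim_{n\to\infty}\mathrm{wsat}(K^{(r)}_n,F)/n\in(0,1)$.
   Context: An $r$-uniform $v$-cycle is the hypergraph on $[v]$ whose $v$ edges are the sets of $r$ consecutive elements in the cyclic order $(1,\ldots,v)$. $K^{(r)}_n$ is the complete $r$-uniform hypergraph on $n$ vertices. $\mathrm{wsat}(G,F)$ is the minimum number of edges of a spanning subhypergraph of $G$ from which $G$ can be obtained by adding missing edges one at a time, each added edge creating a new copy of $F$ containing it. The sharpness $s(F)$ is the minimum non-negative integer $s$ such that for some edge $e\in E(F)$ and some $S\subseteq e$ with $|S|=s$, no edge $e'\in E(F)\setminus\{e\}$ contains $S$. *)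

theory Defs
  imports Complex_Main
begin

definition complete_edges :: "nat \<Rightarrow> 'a set \<Rightarrow> 'a set set" where
  "complete_edges r V = {e. e \<subseteq> V \<and> card e = r}"

definition copy_containing :: "'b set \<Rightarrow> 'b set set \<Rightarrow> 'a set set \<Rightarrow> 'a set \<Rightarrow> bool" where
  "copy_containing VF EF H e \<longleftrightarrow>
     (\<exists>\<phi>. inj_on \<phi> VF \<and> (\<forall>f\<in>EF. \<phi> ` f \<in> H) \<and> (\<exists>f\<in>EF. \<phi> ` f = e))"

definition weakly_saturated :: "'a set set \<Rightarrow> 'a set set \<Rightarrow> 'b set \<Rightarrow> 'b set set \<Rightarrow> bool" where
  "weakly_saturated EG H VF EF \<longleftrightarrow> H \<subseteq> EG \<and>
     (\<exists>es. distinct es \<and> set es = EG - H \<and>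
        (\<forall>i<length es. copy_containing VF EF (H \<union> set (take (Suc i) es)) (es ! i)))"

definition wsat :: "nat \<Rightarrow> nat \<Rightarrow> 'b set \<Rightarrow> 'b set set \<Rightarrow> nat" where
  "wsat r n VF EF = Min {card H | H. weakly_saturated (complete_edges r {..<n}) H VF EF}"

definition sharpness :: "'b set set \<Rightarrow> nat" where
  "sharpness EF = (LEAST s. \<exists>e\<in>EF. \<exists>S\<subseteq>e. card S = s \<and> (\<forall>e'\<in>EF - {e}. \<not> S \<subseteq> e'))"

definition cycle_edges :: "nat \<Rightarrow> nat \<Rightarrow> nat set set" where
  "cycle_edges r v = {{(i + j) mod v | j. j < r} | i. i < v}"

definition F0_edges :: "nat \<Rightarrow> nat \<Rightarrow> nat \<Rightarrow> nat set set" where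
  "F0_edges r v1 v2 = cycle_edges r v1 \<union> complete_edges r {v1..<v1 + v2}"

text \<open>Given the enumeration es = [e_1,...,e_m] of the non-edges, F_i = F_0 plus e_1..e_i.\<close>
definition Fi_edges :: "nat \<Rightarrow> nat \<Rightarrow> nat \<Rightarrow> nat set list \<Rightarrow> nat \<Rightarrow> nat set set" where
  "Fi_edges r v1 v2 es i = F0_edges r v1 v2 \<union> set (take i es)"

text \<open>Disjoint union of F_0,...,F_m: the i-th copy lives on {i} \<times> {0..<v1+v2}.\<close>
definition bigF_vertices :: "nat \<Rightarrow> nat \<Rightarrow> nat set list \<Rightarrow> (nat \<times> nat) set" where
  "bigF_vertices v1 v2 es = {0..length es} \<times> {..<v1 + v2}"

definition bigF_edges :: "nat \<Rightarrow> nat \<Rightarrow> nat \<Rightarrow> nat set list \<Rightarrow> (nat \<times> nat) set set" where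
  "bigF_edges r v1 v2 es =
     (\<Union>i\<in>{0..length es}. (\<lambda>e. Pair i ` e) ` Fi_edges r v1 v2 es i)"

end

theory Submission
  imports Defs
begin

inductive reach :: "'b set \<Rightarrow> 'b set set \<Rightarrow> 'a set set \<Rightarrow> 'a set set \<Rightarrow> bool"
  for VF EF H where
  refl: "reach VF EF H H"
| step: "reach VF EF H G \<Longrightarrow> copy_containing VF EF (insert e G) e \<Longrightarrow> reach VF EF H (insert e G)"

lemma copy_mono: "copy_containing VF EF G e \<Longrightarrow> G \<subseteq> G' \<Longrightarrow> copy_containing VF EF G' e"
  unfolding copy_containing_def by blast

lemma reach_sub: "reach VF EF H G \<Longrightarrow> H \<subseteq> G"
  by (induction rule: reach.induct) auto

lemma reach_mono: "reach VF EF H G \<Longrightarrow> reach VF EF (H \<union> J) (G \<union> J)"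
proof (induction rule: reach.induct)
  case refl then show ?case by (rule reach.refl)
next
  case (step G e)
  have "copy_containing VF EF (insert e (G \<union> J)) e"
    using step(2) by (rule copy_mono) auto
  from reach.step[OF step(3) this] show ?case by simp
qed

lemma reach_trans: "reach VF EF G K \<Longrightarrow> reach VF EF H G \<Longrightarrow> reach VF EF H K"
  by (induction rule: reach.induct) (auto intro: reach.step)

lemma reach_add_set:
  assumes "finite E" "\<And>e. e \<in> E \<Longrightarrow> copy_containing VF EF (insert e G) e"
  shows "reach VF EF G (G \<union> E)"
  using assms
proof (induction E rule: finite_induct)
  case empty then show ?case by (simp add: reach.refl)
next
  case (insert x F)
  have r: "reach VF EF G (G \<union> F)" using insert by auto
  have "copy_containing VF EF (insert x (G \<union> F)) x"
    using insert(4)[of x] by (rule copy_mono) auto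
  from reach.step[OF r this] show ?case by simp
qed

lemma ws_imp_reach:
  assumes "weakly_saturated EG H VF EF"
  shows "H \<subseteq> EG \<and> reach VF EF H EG"
proof -
  from assms obtain es where H: "H \<subseteq> EG" and d: "distinct es" and s: "set es = EG - H"
    and c: "\<forall>i<length es. copy_containing VF EF (H \<union> set (take (Suc i) es)) (es ! i)"
    unfolding weakly_saturated_def by blast
  have "i \<le> length es \<Longrightarrow> reach VF EF H (H \<union> set (take i es))" for i
  proof (induction i)
    case 0 then show ?case by (simp add: reach.refl)
  next
    case (Suc i)
    then have il: "i < length es" by simp
    have eq: "H \<union> set (take (Suc i) es) = insert (es ! i) (H \<union> set (take i es))"
      using il by (auto simp: take_Suc_conv_app_nth)
    have "copy_containing VF EF (insert (es ! i) (H \<union> set (take i es))) (es ! i)"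
      using c il eq by metis
    from reach.step[OF Suc.IH[OF less_imp_le[OF il]] this] show ?case using eq by simp
  qed
  from this[of "length es"] s H have "reach VF EF H (H \<union> (EG - H))" by simp
  moreover have "H \<union> (EG - H) = EG" using H by blast
  ultimately show ?thesis using H by simp
qed

lemma reach_imp_list:
  assumes "reach VF EF H G"
  shows "\<exists>es. distinct es \<and> set es = G - H \<and>
        (\<forall>i<length es. copy_containing VF EF (H \<union> set (take (Suc i) es)) (es ! i))"
  using assms
proof (induction rule: reach.induct)
  case refl then show ?case by (intro exI[of _ "[]"]) simp
next
  case (step G e)
  then obtain es where d: "distinct es" and s: "set es = G - H"
    and c: "\<forall>i<length es. copy_containing VF EF (H \<union> set (take (Suc i) es)) (es ! i)" by blast
  have HG: "H \<subseteq> G" using step(1) by (rule reach_sub)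
  show ?case
  proof (cases "e \<in> G")
    case True
    then have "insert e G = G" by blast
    then show ?thesis using d s c by auto
  next
    case False
    have "H \<union> set es = G" using s HG by blast
    show ?thesis
    proof (intro exI[of _ "es @ [e]"] conjI allI impI)
      show "distinct (es @ [e])" using d s False by simp
      show "set (es @ [e]) = insert e G - H" using s False HG by auto
      fix i assume i: "i < length (es @ [e])"
      show "copy_containing VF EF (H \<union> set (take (Suc i) (es @ [e]))) ((es @ [e]) ! i)"
      proof (cases "i < length es")
        case True then show ?thesis using c by (simp add: nth_append)
      next
        case False
        then have "i = length es" using i by simp
        then show ?thesis using step(2) \<open>H \<union> set es = G\<close> by (simp add: nth_append)
      qed
    qed
  qed
qed

lemma reach_imp_ws:
  assumes "H \<subseteq> EG" "reach VF EF H EG"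
  shows "weakly_saturated EG H VF EF"
  using reach_imp_list[OF assms(2)] assms(1) unfolding weakly_saturated_def by blast

lemma complete_edgesI: "e \<subseteq> V \<Longrightarrow> card e = r \<Longrightarrow> e \<in> complete_edges r V"
  by (simp add: complete_edges_def)

lemma copy_comp:
  fixes \<phi> :: "nat \<Rightarrow> 'a" and G :: "'a set set"
  assumes finA: "finite A" and KA: "complete_edges r A \<subseteq> G"
    and cardA: "card A \<ge> (length es + 1) * (v1 + v2)"
    and allr: "\<And>i f. i \<le> length es \<Longrightarrow> f \<in> Fi_edges r v1 v2 es i \<Longrightarrow> f \<in> complete_edges r {..<v1+v2}"
    and inj: "inj_on \<phi> {..<v1+v2}" and c: "c \<le> length es"
    and imgs: "\<And>f. f \<in> Fi_edges r v1 v2 es c \<Longrightarrow> \<phi> ` f \<in> G"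
    and f0: "f0 \<in> Fi_edges r v1 v2 es c"
  shows "copy_containing (bigF_vertices v1 v2 es) (bigF_edges r v1 v2 es) G (\<phi> ` f0)"
proof -
  define k where "k = v1 + v2"
  define m where "m = length es"
  define D where "D = ({0..m} - {c}) \<times> {..<k}"
  define A' where "A' = A - \<phi> ` {..<k}"
  have cD: "card D = m * k" unfolding D_def using c by (simp add: m_def card_cartesian_product)
  have "card (\<phi> ` {..<k}) \<le> k" using card_image_le[of "{..<k}" \<phi>] by simp
  then have "card A' \<ge> card A - k" unfolding A'_def
    using diff_card_le_card_Diff[of "\<phi> ` {..<k}" A] by simp
  moreover have "card A - k \<ge> m * k" using cardA by (simp add: m_def k_def algebra_simps)
  ultimately have "card D \<le> card A'" using cD by linarith
  moreover have "finite D" unfolding D_def by simp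
  moreover have "finite A'" unfolding A'_def using finA by simp
  ultimately obtain g where gD: "g ` D \<subseteq> A'" and ginj: "inj_on g D"
    using card_le_inj by blast
  define \<psi> where "\<psi> p = (if fst p = c then \<phi> (snd p) else g p)" for p
  show ?thesis unfolding copy_containing_def
  proof (intro exI[of _ \<psi>] conjI ballI bexI)
    show "inj_on \<psi> (bigF_vertices v1 v2 es)"
    proof (rule inj_onI)
      fix p q assume p: "p \<in> bigF_vertices v1 v2 es" and q: "q \<in> bigF_vertices v1 v2 es"
        and e: "\<psi> p = \<psi> q"
      have pD: "fst p \<noteq> c \<Longrightarrow> p \<in> D" using p unfolding D_def bigF_vertices_def m_def k_def by (cases p) auto
      have qD: "fst q \<noteq> c \<Longrightarrow> q \<in> D" using q unfolding D_def bigF_vertices_def m_def k_def by (cases q) auto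
      have pk: "snd p \<in> {..<k}" using p unfolding bigF_vertices_def k_def by auto
      have qk: "snd q \<in> {..<k}" using q unfolding bigF_vertices_def k_def by auto
      show "p = q"
      proof (cases "fst p = c"; cases "fst q = c")
        assume "fst p = c" "fst q = c"
        then have "\<phi> (snd p) = \<phi> (snd q)" using e by (simp add: \<psi>_def)
        then have "snd p = snd q" using inj pk qk unfolding k_def by (meson inj_onD)
        then show ?thesis using \<open>fst p = c\<close> \<open>fst q = c\<close> by (simp add: prod_eq_iff)
      next
        assume "fst p = c" "fst q \<noteq> c"
        then have "g q = \<phi> (snd p)" using e by (simp add: \<psi>_def)
        moreover have "g q \<in> A'" using gD qD \<open>fst q \<noteq> c\<close> by blast
        ultimately have False using pk unfolding A'_def by auto
        then show ?thesis ..
      next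
        assume "fst p \<noteq> c" "fst q = c"
        then have "g p = \<phi> (snd q)" using e by (simp add: \<psi>_def)
        moreover have "g p \<in> A'" using gD pD \<open>fst p \<noteq> c\<close> by blast
        ultimately have False using qk unfolding A'_def by auto
        then show ?thesis ..
      next
        assume "fst p \<noteq> c" "fst q \<noteq> c"
        then have "g p = g q" using e by (simp add: \<psi>_def)
        then show ?thesis using ginj pD qD \<open>fst p \<noteq> c\<close> \<open>fst q \<noteq> c\<close> by (meson inj_onD)
      qed
    qed
  next
    fix f assume "f \<in> bigF_edges r v1 v2 es"
    then obtain i h where i: "i \<in> {0..length es}" and h: "h \<in> Fi_edges r v1 v2 es i"
      and f: "f = Pair i ` h" unfolding bigF_edges_def by blast
    show "\<psi> ` f \<in> G"
    proof (cases "i = c")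
      case True
      have "\<psi> ` f = (\<lambda>x. \<psi> (c, x)) ` h" unfolding f True by (simp add: image_image)
      also have "\<dots> = \<phi> ` h" by (simp add: \<psi>_def)
      finally have "\<psi> ` f = \<phi> ` h" .
      then show ?thesis using imgs h True by simp
    next
      case False
      have hk: "h \<in> complete_edges r {..<k}" using allr[of i h] i h unfolding k_def by simp
      have fD: "f \<subseteq> D" using hk False i unfolding f D_def complete_edges_def m_def by auto
      have "\<psi> ` f = g ` f" unfolding f \<psi>_def using False by auto
      moreover have "card (g ` f) = r"
      proof -
        have "card (g ` f) = card f" using ginj fD by (meson card_image inj_on_subset)
        also have "card f = card h" unfolding f by (simp add: card_image inj_on_def)
        finally show ?thesis using hk by (simp add: complete_edges_def)
      qed
      moreover have "g ` f \<subseteq> A" using gD fD unfolding A'_def by blast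
      ultimately show ?thesis using KA complete_edgesI by (metis subsetD)
    qed
  next
    show "Pair c ` f0 \<in> bigF_edges r v1 v2 es" unfolding bigF_edges_def using c f0 by force
    have "\<psi> ` Pair c ` f0 = (\<lambda>x. \<psi> (c, x)) ` f0" by (simp add: image_image)
    also have "\<dots> = \<phi> ` f0" by (simp add: \<psi>_def)
    finally show "\<psi> ` Pair c ` f0 = \<phi> ` f0" .
  qed
qed

lemma step_lemma:
  fixes \<Phi> :: "(nat \<Rightarrow> 'a) set" and G0 :: "'a set set"
  assumes finA: "finite A" and KA: "complete_edges r A \<subseteq> G0"
    and cardA: "card A \<ge> (length es + 1) * (v1 + v2)"
    and allr: "\<And>i f. i \<le> length es \<Longrightarrow> f \<in> Fi_edges r v1 v2 es i \<Longrightarrow> f \<in> complete_edges r {..<v1+v2}"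
    and finV: "finite V"
    and Phi: "\<And>\<phi>. \<phi> \<in> \<Phi> \<Longrightarrow> inj_on \<phi> {..<v1+v2} \<and> \<phi> ` {..<v1+v2} \<subseteq> V \<and>
                 (\<forall>f\<in>F0_edges r v1 v2. \<phi> ` f \<in> G0)"
  shows "reach (bigF_vertices v1 v2 es) (bigF_edges r v1 v2 es) G0
           (G0 \<union> {\<phi> ` d | \<phi> d. \<phi> \<in> \<Phi> \<and> d \<in> set es})"
proof -
  define Gj where "Gj j = G0 \<union> {\<phi> ` d | \<phi> d. \<phi> \<in> \<Phi> \<and> d \<in> set (take j es)}" for j
  have "j \<le> length es \<Longrightarrow> reach (bigF_vertices v1 v2 es) (bigF_edges r v1 v2 es) G0 (Gj j)" for j
  proof (induction j)
    case 0 then show ?case by (simp add: Gj_def reach.refl)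
  next
    case (Suc j)
    then have j: "j < length es" by simp
    have tk: "set (take (Suc j) es) = insert (es ! j) (set (take j es))"
      using j by (simp add: take_Suc_conv_app_nth)
    define E where "E = {\<phi> ` (es ! j) | \<phi>. \<phi> \<in> \<Phi>}"
    have GS: "Gj (Suc j) = Gj j \<union> E" unfolding Gj_def E_def tk by blast
    have dk: "es ! j \<in> complete_edges r {..<v1+v2}"
      using allr[of "Suc j" "es ! j"] j tk unfolding Fi_edges_def by simp
    have "E \<subseteq> Pow V"
    proof
      fix e assume "e \<in> E"
      then obtain \<phi> where "\<phi> \<in> \<Phi>" "e = \<phi> ` (es ! j)" unfolding E_def by blast
      then show "e \<in> Pow V" using Phi[of \<phi>] dk unfolding complete_edges_def by auto
    qed
    then have finE: "finite E" using finV by (meson finite_Pow_iff finite_subset)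
    have "reach (bigF_vertices v1 v2 es) (bigF_edges r v1 v2 es) (Gj j) (Gj j \<union> E)"
    proof (rule reach_add_set[OF finE])
      fix e assume "e \<in> E"
      then obtain \<phi> where ph: "\<phi> \<in> \<Phi>" and e: "e = \<phi> ` (es ! j)" unfolding E_def by blast
      show "copy_containing (bigF_vertices v1 v2 es) (bigF_edges r v1 v2 es) (insert e (Gj j)) e"
        unfolding e
      proof -
        have K: "complete_edges r A \<subseteq> insert (\<phi> ` (es ! j)) (Gj j)" using KA unfolding Gj_def by blast
        have I: "inj_on \<phi> {..<v1 + v2}" using Phi[OF ph] by blast
        have S: "Suc j \<le> length es" using j by simp
        have F: "es ! j \<in> Fi_edges r v1 v2 es (Suc j)" unfolding Fi_edges_def tk by simp
        have M: "\<phi> ` f \<in> insert (\<phi> ` (es ! j)) (Gj j)" if "f \<in> Fi_edges r v1 v2 es (Suc j)" for f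
        proof -
          have "f \<in> F0_edges r v1 v2 \<or> f = es ! j \<or> f \<in> set (take j es)"
            using that unfolding Fi_edges_def tk by blast
          then show ?thesis using Phi[OF ph] ph unfolding Gj_def by blast
        qed
        show "copy_containing (bigF_vertices v1 v2 es) (bigF_edges r v1 v2 es)
          (insert (\<phi> ` (es ! j)) (Gj j)) (\<phi> ` (es ! j))"
          by (rule copy_comp[OF finA K cardA _ I S M F]) (rule allr)
      qed
    qed
    with Suc.IH j GS show ?case using reach_trans by fastforce
  qed
  from this[of "length es"] show ?thesis unfolding Gj_def by simp
qed

definition cyc :: "nat \<Rightarrow> nat \<Rightarrow> nat \<Rightarrow> nat set" where
  "cyc r v t = (\<lambda>j. (t + j) mod v) ` {..<r}"

lemma cycle_edges_cyc: "cycle_edges r v = cyc r v ` {..<v}"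
  unfolding cycle_edges_def cyc_def by blast

lemma mod2: "a < 2 * (v::nat) \<Longrightarrow> a mod v = (if a < v then a else a - v)"
  by (simp add: le_mod_geq)

lemma cyc_inj:
  fixes t v r :: nat
  assumes "t < v" "r \<le> v"
  shows "inj_on (\<lambda>j. (t + j) mod v) {..<r}"
proof (rule inj_onI)
  fix j j' assume j: "j \<in> {..<r}" and j': "j' \<in> {..<r}" and e: "(t + j) mod v = (t + j') mod v"
  have "t + j < 2 * v" "t + j' < 2 * v" using assms j j' by auto
  then have "(if t + j < v then t + j else t + j - v) = (if t + j' < v then t + j' else t + j' - v)"
    using e mod2[of "t+j" v] mod2[of "t+j'" v] by simp
  then show "j = j'" using j j' assms by (simp split: if_split_asm)
qed

lemma cyc_card: "(t::nat) < v \<Longrightarrow> r \<le> v \<Longrightarrow> card (cyc r v t) = r"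
  unfolding cyc_def by (simp add: card_image[OF cyc_inj])

lemma cyc_sub: "0 < (v::nat) \<Longrightarrow> cyc r v t \<subseteq> {..<v}"
  unfolding cyc_def by auto

lemma cyc_mem: "(x::nat) \<in> cyc r v t \<longleftrightarrow> (\<exists>j<r. x = (t + j) mod v)"
  unfolding cyc_def by auto

context
  fixes r v1 v2 :: nat
  assumes r3: "r \<ge> 3" and v1: "v1 \<ge> 2 * r - 1" and v2: "v2 \<ge> r + 1"
begin

lemma F0_complete: "f \<in> F0_edges r v1 v2 \<Longrightarrow> f \<in> complete_edges r {..<v1+v2}"
  unfolding F0_edges_def cycle_edges_cyc
proof (elim UnE)
  assume "f \<in> cyc r v1 ` {..<v1}"
  then obtain t where t: "t < v1" "f = cyc r v1 t" by auto
  show ?thesis unfolding complete_edges_def using cyc_card[OF t(1)] cyc_sub[of v1 r t] t v1 r3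
    by auto
next
  assume "f \<in> complete_edges r {v1..<v1 + v2}"
  then show ?thesis unfolding complete_edges_def by auto
qed

lemma two_edges:
  assumes x: "x < v1 + v2"
  shows "\<exists>h1 h2. h1 \<in> F0_edges r v1 v2 \<and> h2 \<in> F0_edges r v1 v2 \<and> h1 \<noteq> h2 \<and> x \<in> h1 \<and> x \<in> h2"
proof (cases "x < v1")
  case True
  define t where "t = (x + v1 - 1) mod v1"
  have r1: "1 < r" "r + 1 < v1" using r3 v1 by auto
  have tv: "t < v1" unfolding t_def using True by simp
  have "x + v1 - 1 < 2 * v1" using True by simp
  from mod2[OF this] have t0: "t = (if x + v1 - 1 < v1 then x + v1 - 1 else x + v1 - 1 - v1)"
    unfolding t_def .
  have tval: "t = (if x = 0 then v1 - 1 else x - 1)"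
  proof (cases "x = 0")
    case True
    then have "x + v1 - 1 < v1" using r1 by simp
    then show ?thesis using t0 True by simp
  next
    case False
    then have "\<not> x + v1 - 1 < v1" by simp
    then have "t = x + v1 - 1 - v1" using t0 by simp
    then show ?thesis using False by simp
  qed
  have m1: "x \<in> cyc r v1 x" unfolding cyc_mem using True r1 by (intro exI[of _ 0]) auto
  have m2: "x \<in> cyc r v1 t" unfolding cyc_mem
  proof (intro exI[of _ 1] conjI)
    show "1 < r" using r1 by simp
    show "x = (t + 1) mod v1"
    proof (cases "x = 0")
      case True then show ?thesis using tval r1 by simp
    next
      case False then show ?thesis using tval \<open>x < v1\<close> by simp
    qed
  qed
  have m3: "t \<in> cyc r v1 t" unfolding cyc_mem using tv r1 by (intro exI[of _ 0]) auto
  have m4: "t \<notin> cyc r v1 x"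
  proof
    assume "t \<in> cyc r v1 x"
    then obtain j where j: "j < r" "t = (x + j) mod v1" unfolding cyc_mem by blast
    have "x + j < 2 * v1" using True j r1 by linarith
    from mod2[OF this] j(2) have tj: "t = (if x + j < v1 then x + j else x + j - v1)" by simp
    show False
    proof (cases "x = 0")
      case True then show False using tj tval j r1 by (simp split: if_split_asm)
    next
      case False
      show False
      proof (cases "x + j < v1")
        case True then show False using tj tval \<open>x \<noteq> 0\<close> by simp
      next
        case c: False then show False using tj tval \<open>x \<noteq> 0\<close> j r1 by simp
      qed
    qed
  qed
  have e1: "cyc r v1 x \<in> F0_edges r v1 v2" unfolding F0_edges_def cycle_edges_cyc using True by blast
  have e2: "cyc r v1 t \<in> F0_edges r v1 v2" unfolding F0_edges_def cycle_edges_cyc using tv by blast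
  have ne: "cyc r v1 x \<noteq> cyc r v1 t" using m3 m4 by blast
  show ?thesis using e1 e2 ne m1 m2 by blast
next
  case False
  define Y where "Y = {v1..<v1+v2}"
  have xY: "x \<in> Y" using False x unfolding Y_def by auto
  have "card (Y - {x}) \<ge> r" using xY v2 unfolding Y_def by simp
  then obtain T where T: "T \<subseteq> Y - {x}" "card T = r" "finite T" by (meson obtain_subset_with_card_n)
  have "T \<noteq> {}" using T r3 by auto
  then obtain a where a: "a \<in> T" by blast
  have cTa: "card (T - {a}) = r - 1" using T a by (simp add: card_Diff_singleton)
  have "T - {a} \<noteq> {}"
  proof
    assume e: "T - {a} = {}"
    have "card (T - {a}) = 0" by (simp only: e card.empty)
    then show False using cTa r3 by linarith
  qed
  then obtain b where b: "b \<in> T - {a}" by blast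
  have ab: "a \<in> T" "b \<in> T" "a \<noteq> b" using a b by auto
  define S where "S = insert x T"
  have xT: "x \<notin> T" using T by blast
  have cS: "card S = Suc r" unfolding S_def using T xT by simp
  have SY: "S \<subseteq> Y" unfolding S_def using T xY by blast
  have h1: "S - {a} \<in> F0_edges r v1 v2"
  proof -
    have "card (S - {a}) = r" using cS ab unfolding S_def by (simp add: card_Diff_singleton)
    then show ?thesis unfolding F0_edges_def complete_edges_def using SY unfolding Y_def by blast
  qed
  have h2: "S - {b} \<in> F0_edges r v1 v2"
  proof -
    have "card (S - {b}) = r" using cS ab unfolding S_def by (simp add: card_Diff_singleton)
    then show ?thesis unfolding F0_edges_def complete_edges_def using SY unfolding Y_def by blast
  qed
  have "S - {a} \<noteq> S - {b}" using ab unfolding S_def by blast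
  moreover have "x \<in> S - {a}" "x \<in> S - {b}" using ab xT unfolding S_def by auto
  ultimately show ?thesis using h1 h2 by blast
qed

end

lemma key_cyc:
  fixes r v1 t :: nat
  assumes r3: "r \<ge> 3" and v1: "v1 \<ge> 2 * r - 1" and t: "t < v1"
    and a: "0 \<in> cyc r v1 t" and b: "r - 1 \<in> cyc r v1 t"
  shows "t = 0"
proof -
  obtain j where j: "j < r" "0 = (t + j) mod v1" using a unfolding cyc_mem by blast
  obtain j' where j': "j' < r" "r - 1 = (t + j') mod v1" using b unfolding cyc_mem by blast
  have "t + j < 2 * v1" "t + j' < 2 * v1" using j j' t r3 v1 by linarith+
  from mod2[OF this(1)] mod2[OF this(2)] j(2) j'(2)
  have A: "0 = (if t + j < v1 then t + j else t + j - v1)"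
   and B: "r - 1 = (if t + j' < v1 then t + j' else t + j' - v1)" by simp_all
  show ?thesis
  proof (cases "t + j < v1")
    case True then show ?thesis using A by simp
  next
    case False
    then have "t + j = v1" using A by simp
    then show ?thesis
    proof (cases "t + j' < v1")
      case True
      then have "r - 1 = t + j'" using B by simp
      then show ?thesis using \<open>t + j = v1\<close> j j' r3 v1 by linarith
    next
      case False
      then have "r - 1 = t + j' - v1" using B by simp
      then show ?thesis using \<open>t + j = v1\<close> j j' r3 v1 t False by linarith
    qed
  qed
qed

context
  fixes r v1 v2 :: nat and es :: "nat set list"
  assumes r3: "r \<ge> 3" and v1: "v1 \<ge> 2 * r - 1" and v2: "v2 \<ge> r + 1"
    and es: "set es = complete_edges r {..<v1 + v2} - F0_edges r v1 v2"
begin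

lemma allr: "i \<le> length es \<Longrightarrow> f \<in> Fi_edges r v1 v2 es i \<Longrightarrow> f \<in> complete_edges r {..<v1+v2}"
proof -
  assume "f \<in> Fi_edges r v1 v2 es i"
  then have "f \<in> F0_edges r v1 v2 \<or> f \<in> set es" unfolding Fi_edges_def
    using set_take_subset[of i es] by blast
  then show ?thesis using F0_complete[OF r3 v1 v2] es by blast
qed

lemma bigF_mem: "e \<in> bigF_edges r v1 v2 es \<longleftrightarrow>
   (\<exists>i h. i \<le> length es \<and> h \<in> Fi_edges r v1 v2 es i \<and> e = Pair i ` h)"
proof -
  have "e \<in> bigF_edges r v1 v2 es \<longleftrightarrow> (\<exists>i\<in>{0..length es}. \<exists>h\<in>Fi_edges r v1 v2 es i. e = Pair i ` h)"
    unfolding bigF_edges_def by blast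
  also have "\<dots> \<longleftrightarrow> (\<exists>i h. i \<le> length es \<and> h \<in> Fi_edges r v1 v2 es i \<and> e = Pair i ` h)"
  proof -
    have "{0..length es} = {i. i \<le> length es}" by auto
    then show ?thesis by blast
  qed
  finally show ?thesis .
qed

lemma bigF_I: "i \<le> length es \<Longrightarrow> h \<in> Fi_edges r v1 v2 es i \<Longrightarrow> Pair i ` h \<in> bigF_edges r v1 v2 es"
  unfolding bigF_edges_def by (rule UN_I[of i]) auto

lemma deg2F:
  assumes e: "e \<in> bigF_edges r v1 v2 es" and w: "w \<in> e"
  shows "\<exists>e'\<in>bigF_edges r v1 v2 es. e' \<noteq> e \<and> w \<in> e'"
proof -
  obtain i h where i: "i \<le> length es" and h: "h \<in> Fi_edges r v1 v2 es i" and eh: "e = Pair i ` h"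
    using e unfolding bigF_mem by blast
  obtain x where x: "x \<in> h" and wx: "w = (i, x)" using w eh by blast
  have "x < v1 + v2" using allr[OF i h] x unfolding complete_edges_def by auto
  then obtain h1 h2 where hh: "h1 \<in> F0_edges r v1 v2" "h2 \<in> F0_edges r v1 v2" "h1 \<noteq> h2"
    "x \<in> h1" "x \<in> h2" using two_edges[OF r3 v1 v2] by blast
  have F0i: "F0_edges r v1 v2 \<subseteq> Fi_edges r v1 v2 es i" unfolding Fi_edges_def by blast
  have in1: "Pair i ` h1 \<in> bigF_edges r v1 v2 es" "Pair i ` h2 \<in> bigF_edges r v1 v2 es"
    using hh(1,2) i F0i bigF_I by blast+
  have "inj (Pair i)" by (simp add: inj_on_def)
  then have "Pair i ` h1 \<noteq> Pair i ` h2" using hh(3) inj_image_eq_iff by metis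
  moreover have "w \<in> Pair i ` h1" "w \<in> Pair i ` h2" using hh wx by auto
  ultimately show ?thesis using in1 by (cases "Pair i ` h1 = e") blast+
qed

lemma sharp: "sharpness (bigF_edges r v1 v2 es) = 2"
  unfolding sharpness_def
proof (rule Least_equality)
  define EF where "EF = bigF_edges r v1 v2 es"
  define e where "e = Pair (0::nat) ` cyc r v1 0"
  define S where "S = Pair (0::nat) ` {0, r - 1}"
  have v1p: "0 < v1" "r < v1" using r3 v1 by auto
  have c0: "cyc r v1 0 \<in> F0_edges r v1 v2" unfolding F0_edges_def cycle_edges_cyc using v1p by blast
  have eEF: "e \<in> EF" unfolding EF_def bigF_mem
    by (rule exI[of _ 0], rule exI[of _ "cyc r v1 0"]) (simp add: Fi_edges_def c0 e_def)
  have cS: "card S = 2" unfolding S_def using r3 by (simp add: card_image inj_on_def)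
  have z1: "0 \<in> cyc r v1 0" unfolding cyc_mem using r3 v1p by (intro exI[of _ 0]) simp
  have z2: "r - 1 \<in> cyc r v1 0" unfolding cyc_mem using r3 v1p by (intro exI[of _ "r - 1"]) simp
  have Se: "S \<subseteq> e" unfolding S_def e_def using z1 z2 by blast
  have uniq: "\<not> S \<subseteq> e'" if e': "e' \<in> EF - {e}" for e'
  proof
    assume Se': "S \<subseteq> e'"
    obtain i h where i: "i \<le> length es" and h: "h \<in> Fi_edges r v1 v2 es i" and eh: "e' = Pair i ` h"
      using e' unfolding EF_def by (auto simp: bigF_mem)
    have "(0, 0) \<in> e'" "(0, r - 1) \<in> e'" using Se' unfolding S_def by auto
    then have i0: "i = 0" and m0: "0 \<in> h" and m1: "r - 1 \<in> h" using eh by auto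
    then have hF: "h \<in> F0_edges r v1 v2" using h unfolding Fi_edges_def by simp
    have "h \<notin> complete_edges r {v1..<v1+v2}" using m0 v1p unfolding complete_edges_def by auto
    then have "h \<in> cyc r v1 ` {..<v1}" using hF unfolding F0_edges_def cycle_edges_cyc by blast
    then obtain t where t: "t < v1" "h = cyc r v1 t" by blast
    have "t = 0" using key_cyc[OF r3 v1 t(1)] m0 m1 t(2) by simp
    then have "e' = e" using eh i0 t unfolding e_def by simp
    then show False using e' by blast
  qed
  show "\<exists>e\<in>EF. \<exists>S\<subseteq>e. card S = 2 \<and> (\<forall>e'\<in>EF - {e}. \<not> S \<subseteq> e')"
    using eEF Se cS uniq by blast
next
  fix y assume "\<exists>e\<in>bigF_edges r v1 v2 es. \<exists>S\<subseteq>e. card S = y \<and>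
           (\<forall>e'\<in>bigF_edges r v1 v2 es - {e}. \<not> S \<subseteq> e')"
  then obtain e S where e: "e \<in> bigF_edges r v1 v2 es" and Se: "S \<subseteq> e" and cS: "card S = y"
    and u: "\<forall>e'\<in>bigF_edges r v1 v2 es - {e}. \<not> S \<subseteq> e'" by blast
  obtain i h where i: "i \<le> length es" and h: "h \<in> Fi_edges r v1 v2 es i" and eh: "e = Pair i ` h"
    using e unfolding bigF_mem by blast
  have hc: "finite h" "card h = r" using allr[OF i h] unfolding complete_edges_def
    by (auto intro: finite_subset)
  have fe: "finite e" using hc eh by simp
  show "2 \<le> y"
  proof (rule ccontr)
    assume "\<not> 2 \<le> y"
    then have "card S \<le> 1" using cS by simp
    then obtain w where "w \<in> e" "S \<subseteq> {w}"
    proof (cases "S = {}")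
      case True
      have "h \<noteq> {}" using hc r3 by auto
      then obtain x where "x \<in> h" by blast
      then have "(i, x) \<in> e" using eh by blast
      then show ?thesis using that True by blast
    next
      case False
      then obtain w where "w \<in> S" by blast
      have "finite S" using fe Se finite_subset by blast
      then have "S = {w}" using \<open>card S \<le> 1\<close> \<open>w \<in> S\<close> card_le_Suc0_iff_eq[of S] by auto
      then show ?thesis using that Se by blast
    qed
    then show False using deg2F[OF e] u by blast
  qed
qed

end

lemma complete_edges_mono: "V \<subseteq> W \<Longrightarrow> complete_edges r V \<subseteq> complete_edges r W"
  unfolding complete_edges_def by auto

lemma finite_complete_edges: "finite V \<Longrightarrow> finite (complete_edges r V)"
proof -
  assume "finite V"
  moreover have "complete_edges r V \<subseteq> Pow V" unfolding complete_edges_def by auto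
  ultimately show ?thesis by (meson finite_Pow_iff finite_subset)
qed

lemma wsat_facts:
  shows "\<exists>H. weakly_saturated (complete_edges r {..<n}) H VF EF \<and> card H = wsat r n VF EF"
    and "weakly_saturated (complete_edges r {..<n}) H VF EF \<Longrightarrow> wsat r n VF EF \<le> card H"
proof -
  define W where "W = {card H | H. weakly_saturated (complete_edges r {..<n}) H VF EF}"
  have "weakly_saturated (complete_edges r {..<n}) (complete_edges r {..<n}) VF EF"
    by (rule reach_imp_ws) (auto intro: reach.refl)
  then have ne: "W \<noteq> {}" unfolding W_def by blast
  have "W \<subseteq> card ` Pow (complete_edges r {..<n})" unfolding W_def weakly_saturated_def by auto
  moreover have "finite (card ` Pow (complete_edges r {..<n}))"
    by (simp add: finite_complete_edges)
  ultimately have fin: "finite W" by (rule finite_subset)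
  have "wsat r n VF EF = Min W" unfolding wsat_def W_def by simp
  then have "wsat r n VF EF \<in> W" using Min_in[OF fin ne] by simp
  then show "\<exists>H. weakly_saturated (complete_edges r {..<n}) H VF EF \<and> card H = wsat r n VF EF"
    unfolding W_def by auto
  show "weakly_saturated (complete_edges r {..<n}) H VF EF \<Longrightarrow> wsat r n VF EF \<le> card H"
    unfolding wsat_def using fin W_def by (auto intro!: Min_le)
qed

lemma copy_shift:
  assumes "inj h" "copy_containing VF EF G e"
  shows "copy_containing VF EF (image h ` G) (h ` e)"
proof -
  from assms(2) obtain \<phi> where i: "inj_on \<phi> VF" and a: "\<forall>f\<in>EF. \<phi> ` f \<in> G" and b: "\<exists>f\<in>EF. \<phi> ` f = e"
    unfolding copy_containing_def by blast
  have "inj_on (h \<circ> \<phi>) VF" using i assms(1) by (simp add: comp_inj_on inj_on_subset)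
  moreover have "\<forall>f\<in>EF. (h \<circ> \<phi>) ` f \<in> image h ` G"
  proof
    fix f assume "f \<in> EF"
    then have "h ` (\<phi> ` f) \<in> image h ` G" using a by blast
    then show "(h \<circ> \<phi>) ` f \<in> image h ` G" by (simp only: image_comp)
  qed
  moreover have "\<exists>f\<in>EF. (h \<circ> \<phi>) ` f = h ` e"
  proof -
    obtain f where "f \<in> EF" "\<phi> ` f = e" using b by blast
    then have "(h \<circ> \<phi>) ` f = h ` e" by (simp only: image_comp[symmetric])
    then show ?thesis using \<open>f \<in> EF\<close> by blast
  qed
  ultimately show ?thesis unfolding copy_containing_def by blast
qed

lemma reach_shift:
  assumes "inj h" "reach VF EF H G"
  shows "reach VF EF (image h ` H) (image h ` G)"
  using assms(2)
proof (induction rule: reach.induct)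
  case refl then show ?case by (rule reach.refl)
next
  case (step G e)
  have "copy_containing VF EF (image h ` insert e G) (h ` e)" by (rule copy_shift[OF assms(1) step(2)])
  then have "copy_containing VF EF (insert (h ` e) (image h ` G)) (h ` e)" by simp
  from reach.step[OF step(3) this] show ?case by simp
qed

lemma complete_shift:
  assumes "inj h"
  shows "complete_edges r (h ` V) = image h ` complete_edges r V"
proof
  show "image h ` complete_edges r V \<subseteq> complete_edges r (h ` V)"
    unfolding complete_edges_def using assms by (auto simp: card_image inj_on_subset)
  show "complete_edges r (h ` V) \<subseteq> image h ` complete_edges r V"
  proof
    fix e assume "e \<in> complete_edges r (h ` V)"
    then have e: "e \<subseteq> h ` V" "card e = r" unfolding complete_edges_def by auto
    then obtain U where U: "U \<subseteq> V" "e = h ` U" by (meson subset_image_iff)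
    have "inj_on h U" using assms inj_on_subset by blast
    then have "card U = r" using e U by (simp add: card_image)
    then show "e \<in> image h ` complete_edges r V" using U unfolding complete_edges_def by blast
  qed
qed

lemma ext_inj:
  assumes P: "finite P" and S: "S \<subseteq> P" and cS: "card S \<le> n" and nP: "n \<le> card P"
  shows "\<exists>\<alpha>. inj_on \<alpha> {..<n} \<and> \<alpha> ` {..<n} \<subseteq> P \<and> S \<subseteq> \<alpha> ` {..<n}"
proof -
  have fS: "finite S" using P S finite_subset by blast
  have "card (P - S) = card P - card S" using S fS by (simp add: card_Diff_subset)
  then have "n - card S \<le> card (P - S)" using nP by simp
  then obtain R where R: "R \<subseteq> P - S" "card R = n - card S" "finite R" by (meson obtain_subset_with_card_n)
  define T where "T = S \<union> R"
  have cT: "card T = n" unfolding T_def using R fS cS by (subst card_Un_disjoint) auto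
  have fT: "finite T" unfolding T_def using R fS by simp
  obtain \<alpha> where "bij_betw \<alpha> {0..<card T} T" using ex_bij_betw_nat_finite[OF fT] by blast
  then have "inj_on \<alpha> {..<n}" "\<alpha> ` {..<n} = T" using cT by (auto simp: bij_betw_def atLeast0LessThan)
  then show ?thesis using R S unfolding T_def by blast
qed

lemma cover:
  fixes \<alpha> \<beta> :: "nat \<Rightarrow> 'a"
  assumes ia: "inj_on \<alpha> {..<v1}" and aP: "\<alpha> ` {..<v1} \<subseteq> P"
    and ib: "inj_on \<beta> {..<v2}" and bQ: "\<beta> ` {..<v2} \<subseteq> Q"
    and PQ: "P \<inter> Q = {}" and e: "e \<subseteq> P \<union> Q"
    and eP: "e \<inter> P \<subseteq> \<alpha> ` {..<v1}" and eQ: "e \<inter> Q \<subseteq> \<beta> ` {..<v2}"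
  defines "\<phi> \<equiv> (\<lambda>x. if x < v1 then \<alpha> x else \<beta> (x - v1))"
  shows "inj_on \<phi> {..<v1+v2}" "\<phi> ` {..<v1} \<subseteq> P" "\<phi> ` {v1..<v1+v2} \<subseteq> Q"
    "\<exists>D. D \<subseteq> {..<v1+v2} \<and> e = \<phi> ` D"
proof -
  have p1: "\<phi> x \<in> P" if "x < v1" for x using aP that unfolding \<phi>_def by auto
  have p2: "\<phi> x \<in> Q" if "v1 \<le> x" "x < v1 + v2" for x
  proof -
    have "x - v1 < v2" using that by simp
    then have "\<beta> (x - v1) \<in> Q" using bQ by blast
    then show ?thesis unfolding \<phi>_def using that by simp
  qed
  show "\<phi> ` {..<v1} \<subseteq> P" using p1 by blast
  show "\<phi> ` {v1..<v1+v2} \<subseteq> Q" using p2 by auto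
  show "inj_on \<phi> {..<v1+v2}"
  proof (rule inj_onI)
    fix x y assume x: "x \<in> {..<v1+v2}" and y: "y \<in> {..<v1+v2}" and e: "\<phi> x = \<phi> y"
    show "x = y"
    proof (cases "x < v1"; cases "y < v1")
      assume "x < v1" "y < v1"
      then have "\<alpha> x = \<alpha> y" using e unfolding \<phi>_def by simp
      then show ?thesis using ia \<open>x < v1\<close> \<open>y < v1\<close> by (simp add: inj_on_def)
    next
      assume a: "x < v1" "\<not> y < v1"
      then have "\<phi> x \<in> P" "\<phi> y \<in> Q" using p1 p2 y by auto
      then show ?thesis using e PQ by auto
    next
      assume a: "\<not> x < v1" "y < v1"
      then have "\<phi> y \<in> P" "\<phi> x \<in> Q" using p1 p2 x by auto
      then show ?thesis using e PQ by auto
    next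
      assume a: "\<not> x < v1" "\<not> y < v1"
      then have "\<beta> (x - v1) = \<beta> (y - v1)" using e unfolding \<phi>_def by simp
      moreover have "x - v1 < v2" "y - v1 < v2" using x y a by auto
      ultimately have "x - v1 = y - v1" using ib by (simp add: inj_on_def)
      then show ?thesis using a by simp
    qed
  qed
  define D where "D = {x \<in> {..<v1+v2}. \<phi> x \<in> e}"
  have "e = \<phi> ` D"
  proof
    show "\<phi> ` D \<subseteq> e" unfolding D_def by blast
    show "e \<subseteq> \<phi> ` D"
    proof
      fix y assume ye: "y \<in> e"
      show "y \<in> \<phi> ` D"
      proof (cases "y \<in> P")
        case True
        then obtain x where x: "x < v1" "y = \<alpha> x" using eP ye by blast
        have "\<phi> x = y" unfolding \<phi>_def using x by simp
        moreover have "x \<in> D" unfolding D_def using x \<open>\<phi> x = y\<close> ye by simp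
        ultimately show ?thesis by blast
      next
        case False
        then have "y \<in> Q" using e ye by blast
        then obtain z where z: "z < v2" "y = \<beta> z" using eQ ye by blast
        have "\<phi> (v1 + z) = y" unfolding \<phi>_def using z by simp
        moreover have "v1 + z \<in> D" unfolding D_def using z \<open>\<phi> (v1 + z) = y\<close> ye by simp
        ultimately show ?thesis by blast
      qed
    qed
  qed
  moreover have "D \<subseteq> {..<v1+v2}" unfolding D_def by blast
  ultimately show "\<exists>D. D \<subseteq> {..<v1+v2} \<and> e = \<phi> ` D" by (intro exI[of _ D]) simp
qed

context
  fixes r v1 v2 :: nat and es :: "nat set list"
  assumes r3: "r \<ge> 3" and v1: "v1 \<ge> 2 * r - 1" and v2: "v2 \<ge> r + 1"
    and es: "set es = complete_edges r {..<v1 + v2} - F0_edges r v1 v2"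
begin

lemma bigF_sub: "e \<in> bigF_edges r v1 v2 es \<Longrightarrow> e \<subseteq> bigF_vertices v1 v2 es"
proof -
  assume "e \<in> bigF_edges r v1 v2 es"
  then obtain i h where i: "i \<le> length es" and h: "h \<in> Fi_edges r v1 v2 es i" and eh: "e = Pair i ` h"
    unfolding bigF_mem[OF r3 v1 v2 es] by blast
  have "h \<subseteq> {..<v1+v2}" using allr[OF r3 v1 v2 es i h] unfolding complete_edges_def by blast
  then show ?thesis using i unfolding eh bigF_vertices_def by auto
qed

lemma lower:
  assumes n: "n \<ge> r" and ws: "weakly_saturated (complete_edges r {..<n}) H (bigF_vertices v1 v2 es) (bigF_edges r v1 v2 es)"
  shows "n \<le> r * card H"
proof -
  from ws obtain L where HK: "H \<subseteq> complete_edges r {..<n}" and sL: "set L = complete_edges r {..<n} - H"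
    and c: "\<forall>i<length L. copy_containing (bigF_vertices v1 v2 es) (bigF_edges r v1 v2 es) (H \<union> set (take (Suc i) L)) (L ! i)"
    unfolding weakly_saturated_def by blast
  have cov: "\<exists>e\<in>H. x \<in> e" if x: "x < n" for x
  proof (rule ccontr)
    assume nx: "\<not> (\<exists>e\<in>H. x \<in> e)"
    have "card ({..<n} - {x}) \<ge> r - 1" using x n by simp
    then obtain T where T: "T \<subseteq> {..<n} - {x}" "card T = r - 1" "finite T" by (meson obtain_subset_with_card_n)
    have "x \<notin> T" using T by blast
    then have "card (insert x T) = r" using T r3 by simp
    then have "insert x T \<in> complete_edges r {..<n}" using T x unfolding complete_edges_def by auto
    moreover have "insert x T \<notin> H" using nx by blast
    ultimately have "insert x T \<in> set L" using sL by blast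
    then obtain i where i: "i < length L" "L ! i = insert x T" by (meson in_set_conv_nth)
    define P where "P j \<longleftrightarrow> j < length L \<and> x \<in> L ! j" for j
    have Pi: "P i" unfolding P_def using i by simp
    define i0 where "i0 = (LEAST j. P j)"
    have P0: "P i0" unfolding i0_def by (rule LeastI[of P, OF Pi])
    have min: "\<And>j. P j \<Longrightarrow> i0 \<le> j" unfolding i0_def by (rule Least_le)
    have i0L: "i0 < length L" and xi0: "x \<in> L ! i0" using P0 unfolding P_def by auto
    have "copy_containing (bigF_vertices v1 v2 es) (bigF_edges r v1 v2 es) (H \<union> set (take (Suc i0) L)) (L ! i0)"
      using c i0L by blast
    then obtain \<phi> where inj: "inj_on \<phi> (bigF_vertices v1 v2 es)"
      and all: "\<forall>f\<in>bigF_edges r v1 v2 es. \<phi> ` f \<in> H \<union> set (take (Suc i0) L)"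
      and ex: "\<exists>f\<in>bigF_edges r v1 v2 es. \<phi> ` f = L ! i0"
      unfolding copy_containing_def by blast
    from ex obtain f0 where f0: "f0 \<in> bigF_edges r v1 v2 es" "\<phi> ` f0 = L ! i0" by blast
    have "x \<in> \<phi> ` f0" using xi0 f0(2) by simp
    then obtain w where w: "w \<in> f0" "\<phi> w = x" by blast
    obtain f' where f': "f' \<in> bigF_edges r v1 v2 es" "f' \<noteq> f0" "w \<in> f'"
      using deg2F[OF r3 v1 v2 es f0(1) w(1)] by blast
    have xf': "x \<in> \<phi> ` f'" using w f' by blast
    have "\<phi> ` f' \<in> H \<union> set (take (Suc i0) L)" using all f' by blast
    then have "\<phi> ` f' \<in> set (take (Suc i0) L)" using nx xf' by blast
    then obtain i' where i': "i' < length (take (Suc i0) L)" "take (Suc i0) L ! i' = \<phi> ` f'"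
      unfolding in_set_conv_nth by blast
    have "i' < Suc i0" "i' < length L" using i' by simp_all
    then have i'2: "i' \<le> i0" "i' < length L" "L ! i' = \<phi> ` f'" using i'(2) by simp_all
    then have "P i'" unfolding P_def using xf' by simp
    then have "i' = i0" using min[of i'] i'2(1) by linarith
    then have "\<phi> ` f' = \<phi> ` f0" using i'2 f0 by simp
    moreover have "f' \<subseteq> bigF_vertices v1 v2 es" "f0 \<subseteq> bigF_vertices v1 v2 es"
      using bigF_sub f'(1) f0(1) by auto
    ultimately have "f' = f0" using inj_on_image_eq_iff[OF inj] by blast
    then show False using f' by blast
  qed
  have UH: "\<Union>H \<subseteq> {..<n}" using HK unfolding complete_edges_def by blast
  have "{..<n} \<subseteq> \<Union>H" using cov by blast
  moreover have "finite (\<Union>H)" using UH finite_subset by blast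
  ultimately have "card {..<n} \<le> card (\<Union>H)" by (rule card_mono[rotated])
  then have "n \<le> card (\<Union>H)" by simp
  also have "\<dots> \<le> sum card H" by (rule card_Union_le_sum_card)
  also have "sum card H = sum (\<lambda>_. r) H"
    by (rule sum.cong) (use HK in \<open>auto simp: complete_edges_def\<close>)
  also have "\<dots> = r * card H" by simp
  finally show ?thesis .
qed

end

lemma shift_interval: "(\<lambda>x. a + x) ` {..<b} = {a..<a+(b::nat)}"
proof (rule set_eqI)
  fix y
  show "y \<in> (\<lambda>x. a + x) ` {..<b} \<longleftrightarrow> y \<in> {a..<a+b}"
  proof
    assume "y \<in> {a..<a+b}"
    then have "y = a + (y - a)" "y - a < b" by auto
    then show "y \<in> (\<lambda>x. a + x) ` {..<b}" by blast
  qed auto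
qed

context
  fixes r v1 v2 :: nat and es :: "nat set list"
  assumes r3: "r \<ge> 3" and v1: "v1 \<ge> 2 * r - 1" and v2: "v2 \<ge> r + 1"
    and es: "set es = complete_edges r {..<v1 + v2} - F0_edges r v1 v2"
begin

lemma step_complete:
  fixes \<Phi> :: "(nat \<Rightarrow> nat) set"
  assumes finA: "finite A" and KA: "complete_edges r A \<subseteq> G0"
    and cardA: "card A \<ge> (length es + 1) * (v1 + v2)"
    and finV: "finite V" and G0V: "G0 \<subseteq> complete_edges r V"
    and Phi: "\<And>\<phi>. \<phi> \<in> \<Phi> \<Longrightarrow> inj_on \<phi> {..<v1+v2} \<and> \<phi> ` {..<v1+v2} \<subseteq> V \<and>
                 (\<forall>f\<in>F0_edges r v1 v2. \<phi> ` f \<in> G0)"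
    and cov: "\<And>e. e \<in> complete_edges r V \<Longrightarrow> e \<notin> G0 \<Longrightarrow> \<exists>\<phi>\<in>\<Phi>. \<exists>D. D \<subseteq> {..<v1+v2} \<and> e = \<phi> ` D"
  shows "reach (bigF_vertices v1 v2 es) (bigF_edges r v1 v2 es) G0 (complete_edges r V)"
proof -
  define X where "X = {\<phi> ` d | \<phi> d. \<phi> \<in> \<Phi> \<and> d \<in> set es}"
  have R: "reach (bigF_vertices v1 v2 es) (bigF_edges r v1 v2 es) G0 (G0 \<union> X)"
    unfolding X_def
    by (rule step_lemma[where A=A and V=V]) (use finA KA cardA finV Phi allr[OF r3 v1 v2 es] in blast)+
  have "G0 \<union> X = complete_edges r V"
  proof
    show "G0 \<union> X \<subseteq> complete_edges r V"
    proof
      fix e assume "e \<in> G0 \<union> X"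
      then show "e \<in> complete_edges r V"
      proof
        assume "e \<in> G0" then show ?thesis using G0V by blast
      next
        assume "e \<in> X"
        then obtain \<phi> d where ph: "\<phi> \<in> \<Phi>" and d: "d \<in> set es" and e: "e = \<phi> ` d" unfolding X_def by blast
        have dk: "d \<subseteq> {..<v1+v2}" "card d = r" using d es unfolding complete_edges_def by auto
        have "inj_on \<phi> d" using Phi[OF ph] dk inj_on_subset by blast
        then have "card e = r" using e dk by (simp add: card_image)
        moreover have "e \<subseteq> V" using Phi[OF ph] dk e by blast
        ultimately show ?thesis unfolding complete_edges_def by blast
      qed
    qed
    show "complete_edges r V \<subseteq> G0 \<union> X"
    proof
      fix e assume eV: "e \<in> complete_edges r V"
      show "e \<in> G0 \<union> X"
      proof (cases "e \<in> G0")
        case False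
        then obtain \<phi> D where ph: "\<phi> \<in> \<Phi>" and D: "D \<subseteq> {..<v1+v2}" and e: "e = \<phi> ` D"
          using cov[OF eV] by blast
        have "inj_on \<phi> D" using Phi[OF ph] D inj_on_subset by blast
        then have "card D = r" using e eV unfolding complete_edges_def by (simp add: card_image)
        then have Dc: "D \<in> complete_edges r {..<v1+v2}" using D unfolding complete_edges_def by blast
        have "D \<notin> F0_edges r v1 v2" using Phi[OF ph] e False by blast
        then have "D \<in> set es" using es Dc by blast
        then show ?thesis using ph e unfolding X_def by blast
      qed simp
    qed
  qed
  then show ?thesis using R by simp
qed

lemma glue:
  assumes a: "a \<ge> (length es + 1) * (v1 + v2)" and b: "b \<ge> v2"
  shows "wsat r (a + b) (bigF_vertices v1 v2 es) (bigF_edges r v1 v2 es)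
     \<le> wsat r a (bigF_vertices v1 v2 es) (bigF_edges r v1 v2 es) + wsat r b (bigF_vertices v1 v2 es) (bigF_edges r v1 v2 es)"
proof -
  let ?VF = "bigF_vertices v1 v2 es" and ?EF = "bigF_edges r v1 v2 es"
  obtain H1 where ws1: "weakly_saturated (complete_edges r {..<a}) H1 ?VF ?EF" and c1: "card H1 = wsat r a ?VF ?EF"
    using wsat_facts(1) by blast
  obtain H2 where ws2: "weakly_saturated (complete_edges r {..<b}) H2 ?VF ?EF" and c2: "card H2 = wsat r b ?VF ?EF"
    using wsat_facts(1) by blast
  define h where "h = (\<lambda>x::nat. a + x)"
  have injh: "inj h" unfolding h_def by (simp add: inj_on_def)
  define KA where "KA = complete_edges r {..<a}"
  define KB where "KB = complete_edges r {a..<a+b}"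
  have KBeq: "KB = image h ` complete_edges r {..<b}"
    unfolding KB_def using complete_shift[OF injh, of r "{..<b}"] shift_interval[of a b] unfolding h_def by simp
  define H2' where "H2' = image h ` H2"
  have r1: "reach ?VF ?EF H1 KA" using ws_imp_reach[OF ws1] unfolding KA_def by blast
  have r2: "reach ?VF ?EF H2' KB" using reach_shift[OF injh, of ?VF ?EF H2] ws_imp_reach[OF ws2]
    unfolding KBeq H2'_def by blast
  have s1: "reach ?VF ?EF (H1 \<union> H2') (KA \<union> H2')" by (rule reach_mono[OF r1])
  have s2: "reach ?VF ?EF (KA \<union> H2') (KA \<union> KB)" using reach_mono[OF r2, of KA] by (simp add: Un_commute)
  define P where "P = {..<a}"
  define Q where "Q = {a..<a+b}"
  have PQ: "P \<inter> Q = {}" unfolding P_def Q_def by auto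
  have V: "{..<a+b} = P \<union> Q" unfolding P_def Q_def by auto
  have cP: "card P \<ge> v1" "card Q \<ge> v2" using a b unfolding P_def Q_def by (simp_all add: algebra_simps)
  have KAV: "KA \<subseteq> complete_edges r {..<a+b}" "KB \<subseteq> complete_edges r {..<a+b}"
    unfolding KA_def KB_def by (auto intro!: complete_edges_mono)
  define \<Phi> where "\<Phi> = {\<phi>. inj_on \<phi> {..<v1+v2} \<and> \<phi> ` {..<v1} \<subseteq> P \<and> \<phi> ` {v1..<v1+v2} \<subseteq> Q}"
  have kk: "{..<v1+v2} = {..<v1} \<union> {v1..<v1+v2}" by auto
  have s3: "reach ?VF ?EF (KA \<union> KB) (complete_edges r {..<a+b})"
  proof (rule step_complete[where A = P and \<Phi> = \<Phi>])
    show "finite P" unfolding P_def by simp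
    show "complete_edges r P \<subseteq> KA \<union> KB" unfolding KA_def P_def by blast
    show "(length es + 1) * (v1 + v2) \<le> card P" using a unfolding P_def by simp
    show "finite {..<a + b}" by simp
    show "KA \<union> KB \<subseteq> complete_edges r {..<a + b}" using KAV by blast
  next
    fix \<phi> assume ph: "\<phi> \<in> \<Phi>"
    have i: "inj_on \<phi> {..<v1+v2}" using ph unfolding \<Phi>_def by blast
    have "\<phi> ` {..<v1+v2} \<subseteq> {..<a+b}" using ph unfolding \<Phi>_def V kk by blast
    moreover have "\<forall>f\<in>F0_edges r v1 v2. \<phi> ` f \<in> KA \<union> KB"
    proof
      fix f assume f: "f \<in> F0_edges r v1 v2"
      have fk: "f \<subseteq> {..<v1+v2}" "card f = r" using F0_complete[OF r3 v1 v2 f] unfolding complete_edges_def by auto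
      have cf: "card (\<phi> ` f) = r" using fk i inj_on_subset card_image by metis
      show "\<phi> ` f \<in> KA \<union> KB"
      proof (cases "f \<in> cycle_edges r v1")
        case True
        then obtain t where "t < v1" "f = cyc r v1 t" unfolding cycle_edges_cyc by blast
        then have "f \<subseteq> {..<v1}" using cyc_sub[of v1 r t] by simp
        then have "\<phi> ` f \<subseteq> P" using ph unfolding \<Phi>_def by blast
        then show ?thesis using cf unfolding KA_def P_def complete_edges_def by blast
      next
        case False
        then have "f \<subseteq> {v1..<v1+v2}" using f unfolding F0_edges_def complete_edges_def by blast
        then have "\<phi> ` f \<subseteq> Q" using ph unfolding \<Phi>_def by blast
        then show ?thesis using cf unfolding KB_def Q_def complete_edges_def by blast
      qed
    qed
    ultimately show "inj_on \<phi> {..<v1+v2} \<and> \<phi> ` {..<v1+v2} \<subseteq> {..<a+b} \<and>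
                 (\<forall>f\<in>F0_edges r v1 v2. \<phi> ` f \<in> KA \<union> KB)" using i by blast
  next
    fix e assume e: "e \<in> complete_edges r {..<a + b}"
    have eU: "e \<subseteq> P \<union> Q" "card e = r" "finite e" using e V unfolding complete_edges_def
      by (auto intro: finite_subset)
    have "card (e \<inter> P) \<le> card e" by (rule card_mono[OF eU(3)]) blast
    then have "card (e \<inter> P) \<le> v1" using eU(2) r3 v1 v2 by linarith
    then obtain \<alpha> where \<alpha>: "inj_on \<alpha> {..<v1}" "\<alpha> ` {..<v1} \<subseteq> P" "e \<inter> P \<subseteq> \<alpha> ` {..<v1}"
      using ext_inj[of P "e \<inter> P" v1] cP unfolding P_def by auto
    have "card (e \<inter> Q) \<le> card e" by (rule card_mono[OF eU(3)]) blast
    then have "card (e \<inter> Q) \<le> v2" using eU(2) r3 v1 v2 by linarith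
    then obtain \<beta> where \<beta>: "inj_on \<beta> {..<v2}" "\<beta> ` {..<v2} \<subseteq> Q" "e \<inter> Q \<subseteq> \<beta> ` {..<v2}"
      using ext_inj[of Q "e \<inter> Q" v2] cP unfolding Q_def by auto
    note cv = cover[OF \<alpha>(1,2) \<beta>(1,2) PQ eU(1) \<alpha>(3) \<beta>(3)]
    show "\<exists>\<phi>\<in>\<Phi>. \<exists>D. D \<subseteq> {..<v1 + v2} \<and> e = \<phi> ` D"
      using cv unfolding \<Phi>_def by blast
  qed
  have H: "H1 \<union> H2' \<subseteq> complete_edges r {..<a+b}"
    using reach_sub[OF r1] reach_sub[OF r2] KAV by blast
  have "weakly_saturated (complete_edges r {..<a+b}) (H1 \<union> H2') ?VF ?EF"
    by (rule reach_imp_ws[OF H]) (rule reach_trans[OF s3 reach_trans[OF s2 s1]])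
  then have "wsat r (a+b) ?VF ?EF \<le> card (H1 \<union> H2')" by (rule wsat_facts(2))
  also have "\<dots> \<le> card H1 + card H2'" by (rule card_Un_le)
  also have "card H2' \<le> card H2" unfolding H2'_def by (rule card_image_le) (use ws2 in \<open>auto simp: weakly_saturated_def intro: finite_subset finite_complete_edges\<close>)
  finally show ?thesis using c1 c2 by simp
qed

lemma F0_img:
  assumes i: "inj_on \<phi> {..<v1+v2}" and sh: "\<forall>x<v1. \<phi> x = a + x" and Y: "\<phi> ` {v1..<v1+v2} \<subseteq> {..<a}"
    and f: "f \<in> F0_edges r v1 v2"
  shows "\<phi> ` f \<in> complete_edges r {..<a} \<union> image (\<lambda>x. a + x) ` cycle_edges r v1"
proof -
  have fk: "f \<subseteq> {..<v1+v2}" "card f = r" using F0_complete[OF r3 v1 v2 f] unfolding complete_edges_def by auto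
  have cf: "card (\<phi> ` f) = r" using fk i inj_on_subset card_image by metis
  show ?thesis
  proof (cases "f \<in> cycle_edges r v1")
    case True
    then obtain t where "t < v1" "f = cyc r v1 t" unfolding cycle_edges_cyc by blast
    then have "f \<subseteq> {..<v1}" using cyc_sub[of v1 r t] by simp
    then have "\<phi> ` f = (\<lambda>x. a + x) ` f" using sh by (auto intro!: image_cong)
    then show ?thesis using True by blast
  next
    case False
    then have "f \<subseteq> {v1..<v1+v2}" using f unfolding F0_edges_def complete_edges_def by blast
    then have "\<phi> ` f \<subseteq> {..<a}" using Y by blast
    then show ?thesis using cf unfolding complete_edges_def by blast
  qed
qed

lemma cycblock:
  assumes a: "a \<ge> (length es + 1) * (v1 + v2)"
  shows "wsat r (a + v1) (bigF_vertices v1 v2 es) (bigF_edges r v1 v2 es) + 1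
     \<le> wsat r a (bigF_vertices v1 v2 es) (bigF_edges r v1 v2 es) + v1"
proof -
  let ?VF = "bigF_vertices v1 v2 es" and ?EF = "bigF_edges r v1 v2 es"
  obtain H1 where ws1: "weakly_saturated (complete_edges r {..<a}) H1 ?VF ?EF" and c1: "card H1 = wsat r a ?VF ?EF"
    using wsat_facts(1) by blast
  define h where "h = (\<lambda>x::nat. a + x)"
  have injh: "inj h" unfolding h_def by (simp add: inj_on_def)
  define KA where "KA = complete_edges r {..<a}"
  define CB where "CB = image h ` cycle_edges r v1"
  define estar where "estar = h ` cyc r v1 0"
  define P where "P = {a..<a+v1}"
  define Q where "Q = {..<a}"
  define V where "V = {..<a+v1}"
  have v1p: "0 < v1" "r \<le> v1" using r3 v1 by auto
  have hP: "h ` {..<v1} = P" unfolding h_def P_def by (rule shift_interval)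
  have ia: "inj_on h {..<v1}" using injh inj_on_subset by blast
  have PQ: "P \<inter> Q = {}" unfolding P_def Q_def by auto
  have VPQ: "V = P \<union> Q" unfolding V_def P_def Q_def by auto
  have cQ: "card Q \<ge> v2" using a unfolding Q_def by (simp add: algebra_simps)
  have es_in: "estar \<in> CB" unfolding estar_def CB_def cycle_edges_cyc using v1p by blast
  have CBV: "CB \<subseteq> complete_edges r V"
  proof
    fix e assume "e \<in> CB"
    then obtain t where t: "t < v1" "e = h ` cyc r v1 t" unfolding CB_def cycle_edges_cyc by blast
    have "cyc r v1 t \<subseteq> {..<v1}" using cyc_sub[of v1 r t] v1p by simp
    then have "e \<subseteq> P" using t hP by blast
    moreover have "card e = r" using t cyc_card[OF t(1) v1p(2)] injh by (simp add: card_image inj_on_subset)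
    ultimately show "e \<in> complete_edges r V" unfolding complete_edges_def VPQ by blast
  qed
  have KAV: "KA \<subseteq> complete_edges r V" unfolding KA_def V_def by (rule complete_edges_mono) auto
  define H where "H = H1 \<union> (CB - {estar})"
  have r1: "reach ?VF ?EF H1 KA" using ws_imp_reach[OF ws1] unfolding KA_def by blast
  have s1: "reach ?VF ?EF H (KA \<union> (CB - {estar}))" unfolding H_def by (rule reach_mono[OF r1])
  obtain \<beta>0 where \<beta>0: "inj_on \<beta>0 {..<v2}" "\<beta>0 ` {..<v2} \<subseteq> Q" "{} \<inter> Q \<subseteq> \<beta>0 ` {..<v2}"
    using ext_inj[of Q "{}" v2] cQ unfolding Q_def by auto
  define \<phi>0 where "\<phi>0 = (\<lambda>x. if x < v1 then h x else \<beta>0 (x - v1))"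
  have e1: "{} \<inter> P \<subseteq> h ` {..<v1}" by simp
  note cv0' = cover[OF ia equalityD1[OF hP] \<beta>0(1,2) PQ empty_subsetI e1 \<beta>0(3)]
  have cv0: "inj_on \<phi>0 {..<v1+v2}" "\<phi>0 ` {v1..<v1+v2} \<subseteq> Q"
    using cv0'(1,3) unfolding \<phi>0_def by blast+
  have sh0: "\<forall>x<v1. \<phi>0 x = a + x" unfolding \<phi>0_def h_def by simp
  have Y0: "\<phi>0 ` {v1..<v1+v2} \<subseteq> {..<a}" using cv0 unfolding Q_def by blast
  have copy0: "copy_containing ?VF ?EF (KA \<union> CB) (\<phi>0 ` cyc r v1 0)"
  proof (rule copy_comp[where A = Q])
    show "finite Q" unfolding Q_def by simp
    show "complete_edges r Q \<subseteq> KA \<union> CB" unfolding KA_def Q_def by blast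
    show "(length es + 1) * (v1 + v2) \<le> card Q" using a unfolding Q_def by simp
    show "inj_on \<phi>0 {..<v1 + v2}" using cv0 by blast
    show "0 \<le> length es" by simp
    show "cyc r v1 0 \<in> Fi_edges r v1 v2 es 0"
      unfolding Fi_edges_def F0_edges_def cycle_edges_cyc using v1p by simp
  next
    fix i f assume "i \<le> length es" "f \<in> Fi_edges r v1 v2 es i"
    then show "f \<in> complete_edges r {..<v1 + v2}" by (rule allr[OF r3 v1 v2 es])
  next
    fix f assume "f \<in> Fi_edges r v1 v2 es 0"
    then have "f \<in> F0_edges r v1 v2" unfolding Fi_edges_def by simp
    then show "\<phi>0 ` f \<in> KA \<union> CB" using F0_img[OF _ sh0 Y0] cv0 unfolding KA_def CB_def h_def by blast
  qed
  have "\<phi>0 ` cyc r v1 0 = estar" unfolding estar_def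
    using cyc_sub[of v1 r 0] v1p by (auto simp: \<phi>0_def intro!: image_cong)
  moreover have "insert estar (KA \<union> (CB - {estar})) = KA \<union> CB" using es_in by blast
  ultimately have copy0': "copy_containing ?VF ?EF (insert estar (KA \<union> (CB - {estar}))) estar"
    using copy0 by simp
  have s2: "reach ?VF ?EF (KA \<union> (CB - {estar})) (KA \<union> CB)"
    using reach.step[OF reach.refl copy0'] \<open>insert estar (KA \<union> (CB - {estar})) = KA \<union> CB\<close> by simp
  define \<Phi> where "\<Phi> = {\<phi>. inj_on \<phi> {..<v1+v2} \<and> (\<forall>x<v1. \<phi> x = a + x) \<and> \<phi> ` {v1..<v1+v2} \<subseteq> {..<a}}"
  have s3: "reach ?VF ?EF (KA \<union> CB) (complete_edges r V)"
  proof (rule step_complete[where A = Q and \<Phi> = \<Phi>])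
    show "finite Q" unfolding Q_def by simp
    show "complete_edges r Q \<subseteq> KA \<union> CB" unfolding KA_def Q_def by blast
    show "(length es + 1) * (v1 + v2) \<le> card Q" using a unfolding Q_def by simp
    show "finite V" unfolding V_def by simp
    show "KA \<union> CB \<subseteq> complete_edges r V" using KAV CBV by blast
  next
    fix \<phi> assume ph: "\<phi> \<in> \<Phi>"
    have i: "inj_on \<phi> {..<v1+v2}" using ph unfolding \<Phi>_def by blast
    have sh: "\<forall>x<v1. \<phi> x = a + x" using ph unfolding \<Phi>_def by blast
    have Y: "\<phi> ` {v1..<v1+v2} \<subseteq> {..<a}" using ph unfolding \<Phi>_def by blast
    have "\<phi> ` {..<v1+v2} \<subseteq> V"
    proof
      fix y assume "y \<in> \<phi> ` {..<v1+v2}"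
      then obtain x where x: "x < v1 + v2" "y = \<phi> x" by blast
      show "y \<in> V"
      proof (cases "x < v1")
        case True then show ?thesis using sh x unfolding V_def by simp
      next
        case False
        then have "x \<in> {v1..<v1+v2}" using x by simp
        then have "\<phi> x \<in> {..<a}" using Y by blast
        then show ?thesis using x unfolding V_def by simp
      qed
    qed
    moreover have "\<forall>f\<in>F0_edges r v1 v2. \<phi> ` f \<in> KA \<union> CB"
    proof
      fix f assume "f \<in> F0_edges r v1 v2"
      from F0_img[OF i sh Y this] show "\<phi> ` f \<in> KA \<union> CB" unfolding KA_def CB_def h_def .
    qed
    ultimately show "inj_on \<phi> {..<v1+v2} \<and> \<phi> ` {..<v1+v2} \<subseteq> V \<and>
                 (\<forall>f\<in>F0_edges r v1 v2. \<phi> ` f \<in> KA \<union> CB)" using i by blast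
  next
    fix e assume e: "e \<in> complete_edges r V"
    have eV: "e \<subseteq> V" "card e = r" using e unfolding complete_edges_def by auto
    have fe: "finite e" using eV(1) finite_subset unfolding V_def by blast
    have eU: "e \<subseteq> P \<union> Q" "card e = r" "finite e" using eV VPQ fe by auto
    have "card (e \<inter> Q) \<le> card e" by (rule card_mono[OF eU(3)]) blast
    then have "card (e \<inter> Q) \<le> v2" using eU(2) v2 by linarith
    then obtain \<beta> where \<beta>: "inj_on \<beta> {..<v2}" "\<beta> ` {..<v2} \<subseteq> Q" "e \<inter> Q \<subseteq> \<beta> ` {..<v2}"
      using ext_inj[of Q "e \<inter> Q" v2] cQ unfolding Q_def by auto
    have eP: "e \<inter> P \<subseteq> h ` {..<v1}" using hP by blast
    note cv = cover[OF ia equalityD1[OF hP] \<beta>(1,2) PQ eU(1) eP \<beta>(3)]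
    define \<psi> where "\<psi> = (\<lambda>x. if x < v1 then h x else \<beta> (x - v1))"
    have "inj_on \<psi> {..<v1+v2}" "\<psi> ` {v1..<v1+v2} \<subseteq> {..<a}"
      using cv(1,3) unfolding \<psi>_def Q_def by blast+
    moreover have "\<forall>x<v1. \<psi> x = a + x" unfolding \<psi>_def h_def by simp
    ultimately have "\<psi> \<in> \<Phi>" unfolding \<Phi>_def by blast
    moreover obtain D where "D \<subseteq> {..<v1 + v2}" "e = \<psi> ` D" using cv(4) unfolding \<psi>_def by blast
    ultimately show "\<exists>\<phi>\<in>\<Phi>. \<exists>D. D \<subseteq> {..<v1 + v2} \<and> e = \<phi> ` D" by blast
  qed
  have H: "H \<subseteq> complete_edges r V"
    unfolding H_def using reach_sub[OF r1] KAV CBV by blast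
  have "weakly_saturated (complete_edges r V) H ?VF ?EF"
    by (rule reach_imp_ws[OF H]) (rule reach_trans[OF s3 reach_trans[OF s2 s1]])
  then have w: "wsat r (a+v1) ?VF ?EF \<le> card H" unfolding V_def by (rule wsat_facts(2))
  have "card H \<le> card H1 + card (CB - {estar})" unfolding H_def by (rule card_Un_le)
  moreover have "card CB \<le> v1"
  proof -
    have "card CB \<le> card (cycle_edges r v1)" unfolding CB_def by (rule card_image_le) (simp add: cycle_edges_cyc)
    also have "\<dots> \<le> card {..<v1}" unfolding cycle_edges_cyc by (rule card_image_le) simp
    finally show ?thesis by simp
  qed
  moreover have "card (CB - {estar}) + 1 = card CB"
  proof -
    have "finite CB" unfolding CB_def cycle_edges_cyc by simp
    then have "card CB > 0" using es_in card_gt_0_iff by blast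
    moreover have "card (CB - {estar}) = card CB - 1" using es_in by (simp add: card_Diff_singleton)
    ultimately show ?thesis by linarith
  qed
  ultimately show ?thesis using w c1 by linarith
qed

end

lemma fekete_aux:
  fixes f :: "nat \<Rightarrow> nat"
  assumes sub: "\<And>a b. a \<ge> N \<Longrightarrow> b \<ge> N \<Longrightarrow> f (a + b) \<le> f a + f b"
    and p: "p \<ge> N" and s: "s \<ge> N"
  shows "f (q * p + s) \<le> q * f p + f s"
proof (induction q)
  case 0 then show ?case by simp
next
  case (Suc q)
  have "f (Suc q * p + s) = f (p + (q * p + s))" by (simp add: algebra_simps)
  also have "\<dots> \<le> f p + f (q * p + s)" using sub[of p "q * p + s"] p s by simp
  also have "\<dots> \<le> f p + (q * f p + f s)" using Suc.IH by simp
  finally show ?case by simp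
qed

lemma fekete:
  fixes f :: "nat \<Rightarrow> nat"
  assumes N: "N > 0" and sub: "\<And>a b. a \<ge> N \<Longrightarrow> b \<ge> N \<Longrightarrow> f (a + b) \<le> f a + f b"
  shows "(\<lambda>n. real (f n) / real n) \<longlonglongrightarrow> Inf ((\<lambda>n. real (f n) / real n) ` {N..})"
proof (rule LIMSEQ_I)
  define g where "g n = real (f n) / real n" for n
  define L where "L = Inf (g ` {N..})"
  have bdd: "bdd_below (g ` {N..})" unfolding g_def by (intro bdd_belowI[of _ 0]) auto
  have ne: "g ` {N..} \<noteq> {}" by auto
  have Lle: "L \<le> g n" if "n \<ge> N" for n unfolding L_def using that bdd by (intro cInf_lower) auto
  fix \<epsilon> :: real assume e: "0 < \<epsilon>"
  have "L < L + \<epsilon> / 2" using e by simp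
  then obtain p where p: "p \<ge> N" "g p < L + \<epsilon> / 2"
    using cInf_lessD[OF ne, of "L + \<epsilon> / 2"] unfolding L_def by auto
  have pp: "p > 0" using p N by simp
  define M where "M = (\<Sum>s\<in>{N..<N+p}. f s)"
  have Ms: "f s \<le> M" if "s \<in> {N..<N+p}" for s
    unfolding M_def using that by (intro member_le_sum) auto
  define n0 where "n0 = N + nat \<lceil>2 * real M / \<epsilon>\<rceil> + 1"
  have "\<forall>n\<ge>n0. norm (g n - L) < \<epsilon>"
  proof (intro allI impI)
    fix n assume n: "n \<ge> n0"
    have nN: "n \<ge> N" using n unfolding n0_def by simp
    have npos: "real n > 0" using nN N by simp
    define q where "q = (n - N) div p"
    define s where "s = N + (n - N) mod p"
    have ns: "n = q * p + s" unfolding q_def s_def using nN by simp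
    have sr: "s \<in> {N..<N+p}" unfolding s_def using pp by simp
    have "f n \<le> q * f p + f s" unfolding ns by (rule fekete_aux[OF sub p(1)]) (use sr in auto)
    also have "\<dots> \<le> q * f p + M" using Ms[OF sr] by simp
    finally have fn: "real (f n) \<le> real q * real (f p) + real M" by (metis of_nat_add of_nat_le_iff of_nat_mult)
    have qp: "real q * real p \<le> real n" unfolding ns by simp
    have "real q * real (f p) = real q * real p * g p" unfolding g_def using pp by simp
    also have "\<dots> \<le> real n * g p" using qp by (intro mult_right_mono) (auto simp: g_def)
    finally have "real (f n) \<le> real n * g p + real M" using fn by simp
    then have gn: "g n \<le> g p + real M / real n" unfolding g_def using npos by (simp add: field_simps)
    have "real n > 2 * real M / \<epsilon>" using n unfolding n0_def by linarith
    then have "real M / real n < \<epsilon> / 2" using npos e by (simp add: field_simps)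
    then have "g n < L + \<epsilon>" using gn p(2) by linarith
    moreover have "L \<le> g n" using Lle[OF nN] .
    ultimately show "norm (g n - L) < \<epsilon>" by simp
  qed
  then show "\<exists>no. \<forall>n\<ge>no. norm (real (f n) / real n - Inf ((\<lambda>n. real (f n) / real n) ` {N..})) < \<epsilon>"
    unfolding g_def L_def by blast
qed

theorem claim3:
  fixes r v1 v2 :: nat and es :: "nat set list"
  assumes "r \<ge> 3" and "v1 \<ge> 2 * r - 1" and "v2 \<ge> r + 1"
    and "distinct es"
    and "set es = complete_edges r {..<v1 + v2} - F0_edges r v1 v2"
  shows "sharpness (bigF_edges r v1 v2 es) = 2 \<and>
    (\<exists>L::real. (\<lambda>n. real (wsat r n (bigF_vertices v1 v2 es) (bigF_edges r v1 v2 es)) / real n)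
        \<longlonglongrightarrow> L \<and> 0 < L \<and> L < 1)"
proof -
  note r3 = assms(1) and v1 = assms(2) and v2 = assms(3) and es = assms(5)
  define f where "f n = wsat r n (bigF_vertices v1 v2 es) (bigF_edges r v1 v2 es)" for n
  define N where "N = (length es + 1) * (v1 + v2)"
  define g where "g n = real (f n) / real n" for n
  define L where "L = Inf (g ` {N..})"
  have kN: "v1 + v2 \<le> N" unfolding N_def by simp
  have Npos: "N > 0" using kN v2 by simp
  have sub: "f (a + b) \<le> f a + f b" if "a \<ge> N" "b \<ge> N" for a b
    unfolding f_def using glue[OF r3 v1 v2 es, of a b] that kN unfolding N_def by simp
  have conv: "g \<longlonglongrightarrow> L" unfolding g_def L_def by (rule fekete[OF Npos sub]) auto
  have bdd: "bdd_below (g ` {N..})" unfolding g_def by (intro bdd_belowI[of _ 0]) auto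
  have ne: "g ` {N..} \<noteq> {}" by auto
  have low: "1 / real r \<le> g n" if "n \<ge> N" for n
  proof -
    obtain H where ws: "weakly_saturated (complete_edges r {..<n}) H (bigF_vertices v1 v2 es) (bigF_edges r v1 v2 es)"
      and cH: "card H = f n" using wsat_facts(1) unfolding f_def by blast
    have "n \<ge> r" using that kN v1 r3 by linarith
    then have "n \<le> r * f n" using lower[OF r3 v1 v2 es _ ws] cH by simp
    then have "real n \<le> real r * real (f n)" by (metis of_nat_le_iff of_nat_mult)
    moreover have "real n > 0" "real r > 0" using that Npos r3 by auto
    ultimately show ?thesis unfolding g_def by (simp add: field_simps)
  qed
  have Lpos: "L > 0"
  proof -
    have "1 / real r \<le> L" unfolding L_def by (rule cInf_greatest[OF ne]) (use low in auto)
    moreover have "1 / real r > 0" using r3 by simp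
    ultimately show ?thesis by linarith
  qed
  have cyc: "f (N + t * v1) + t \<le> f N + t * v1" for t
  proof (induction t)
    case 0 then show ?case by simp
  next
    case (Suc t)
    have "f (N + t * v1 + v1) + 1 \<le> f (N + t * v1) + v1"
      using cycblock[OF r3 v1 v2 es, of "N + t * v1"] unfolding f_def N_def by simp
    then show ?case using Suc.IH by (simp add: algebra_simps)
  qed
  define t0 where "t0 = f N + 1"
  define n where "n = N + t0 * v1"
  have "f n + t0 \<le> f N + t0 * v1" unfolding n_def by (rule cyc)
  then have "f n < n" unfolding n_def t0_def by simp
  moreover have "n > 0" unfolding n_def using Npos by simp
  ultimately have "g n < 1" unfolding g_def by simp
  moreover have "L \<le> g n" unfolding L_def using bdd n_def by (intro cInf_lower) auto
  ultimately have "L < 1" by simp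
  have sh: "sharpness (bigF_edges r v1 v2 es) = 2" by (rule sharp[OF r3 v1 v2 es])
  show ?thesis using sh conv Lpos \<open>L < 1\<close> unfolding g_def f_def by blast
qed

end
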